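(* Let $\lambda>0$ and, for $a_1>0$, $a_2\in\mathbb R$, $u\in[0,1)$, let $B(a_1,a_2;u)=\int_0^u t^{a_1-1}(1-t)^{a_2-1}\,dt$ denote the incomplete Beta function and $\gamma(\lambda,x)=\int_0^x e^{-t}t^{\lambda-1}\,dt$ the incomplete gamma function. (i) If $\lambda<1$, then for all $x,y>0$, $$\frac{\Gamma(\lambda+y)}{\Gamma(y)}\, B\Big(\lambda, y; \frac{x}{x+y}\Big)<\gamma(\lambda,x).$$ (ii) If $\lambda>1$, then for all $x,y>0$, $$y^{\lambda}\, B\Big(\lambda, y; \frac{x}{x+y}\Big)<\gamma(\lambda,x).$$ *)

theory Defs
  imports "HOL-Analysis.Analysis"
begin

definition incomplete_beta :: "real \<Rightarrow> real \<Rightarrow> real \<Rightarrow> real" where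
  "incomplete_beta a1 a2 u = integral {0..u} (\<lambda>t. t powr (a1 - 1) * (1 - t) powr (a2 - 1))"

definition lower_incomplete_gamma :: "real \<Rightarrow> real \<Rightarrow> real" where
  "lower_incomplete_gamma lam x = integral {0..x} (\<lambda>t. exp (- t) * t powr (lam - 1))"

end

theory Submission
  imports Defs "HOL-Real_Asymp.Real_Asymp"
begin

lemma psi_sign:
  fixes lam y c :: real
  assumes lam: "lam > 0" and y: "y > 0" and c: "c \<le> 0"
  defines "psi \<equiv> (\<lambda>x. (lam+y)*(ln(x+y) - ln y) - x - c)"
  obtains s0 where "s0 > 0" "\<And>x. 0 < x \<Longrightarrow> x < s0 \<Longrightarrow> psi x > 0"
    "\<And>x. s0 < x \<Longrightarrow> psi x < 0"
proof -
  have der: "DERIV psi x :> (lam+y)/(x+y) - 1" if "x \<ge> 0" for x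
    unfolding psi_def using that y
    by (auto intro!: derivative_eq_intros)
  have cont: "continuous_on {a..b} psi" if "a \<ge> 0" for a b
    unfolding psi_def using that y
    by (intro continuous_intros) auto
  have p0: "psi 0 \<ge> 0" unfolding psi_def using c by simp
  have inc: "psi a < psi b" if "0 \<le> a" "a < b" "b \<le> lam" for a b
  proof (rule DERIV_pos_imp_increasing_open[OF that(2) _ cont[OF that(1)]])
    fix t assume t: "a < t" "t < b"
    then have "(lam+y)/(t+y) - 1 > 0" using that y by (simp add: field_simps)
    then show "\<exists>d. DERIV psi t :> d \<and> d > 0" using der[of t] t that by auto
  qed
  have dec: "psi a > psi b" if "lam \<le> a" "a < b" for a b
  proof (rule DERIV_neg_imp_decreasing_open[OF that(2) _ cont])
    fix t assume t: "a < t" "t < b"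
    then have "(lam+y)/(t+y) - 1 < 0" using that y lam by (simp add: field_simps)
    then show "\<exists>d. DERIV psi t :> d \<and> d < 0" using der[of t] t that lam by auto
  next show "0 \<le> a" using that lam by simp
  qed
  have "filterlim psi at_bot at_top" unfolding psi_def using lam y by real_asymp
  then have "eventually (\<lambda>x. psi x < 0) at_top"
    by (simp add: filterlim_at_bot_dense)
  moreover have "eventually (\<lambda>x. x > lam) at_top" by (rule eventually_gt_at_top)
  ultimately have "eventually (\<lambda>x. psi x < 0 \<and> x > lam) at_top" by (rule eventually_conj)
  then obtain M where M: "psi M < 0" "M > lam" by (auto simp: eventually_at_top_linorder)
  have pl: "psi lam > 0" using inc[of 0 lam] p0 lam by simp
  obtain s0 where s0: "s0 \<ge> lam" "s0 \<le> M" "psi s0 = 0"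
    using IVT2'[of psi M 0 lam] M pl cont[of lam M] lam by force
  have "s0 \<noteq> lam" using pl s0 by auto
  with s0 have s0l: "s0 > lam" by simp
  show ?thesis
  proof
    show "s0 > 0" using s0l lam by simp
  next
    fix x assume x: "0 < x" "x < s0"
    show "psi x > 0"
    proof (cases "x \<le> lam")
      case True then show ?thesis using inc[of 0 x] p0 x by simp
    next
      case False then show ?thesis using dec[of x s0] s0 x by simp
    qed
  next
    fix x assume x: "s0 < x"
    show "psi x < 0" using dec[of s0 x] s0 x by simp
  qed
qed

lemma main_ineq:
  fixes lam y K x :: real
  assumes lam: "lam > 0" and y: "y > 0" and K: "K > 0" and Ky: "K \<le> y powr lam"
    and KB: "K * Beta lam y \<le> Gamma lam" and x: "x > 0"
  shows "K * incomplete_beta lam y (x / (x + y)) < lower_incomplete_gamma lam x"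
proof -
  define g where "g = (\<lambda>t::real. exp(-t) * t powr (lam-1))"
  define b where "b = (\<lambda>t::real. t powr (lam-1) * (1-t) powr (y-1))"
  define G where "G = (\<lambda>x. integral {0..x} g)"
  define Bi where "Bi = (\<lambda>u. integral {0..u} b)"
  define D where "D = (\<lambda>x. G x - K * Bi (x/(x+y)))"
  define c where "c = ln K - lam * ln y"
  define psi where "psi = (\<lambda>x. (lam+y)*(ln(x+y) - ln y) - x - c)"
  have c0: "c \<le> 0"
  proof -
    have "ln K \<le> ln (y powr lam)" using Ky K y by (subst ln_le_cancel_iff) auto
    then show ?thesis using y by (simp add: c_def ln_powr)
  qed
  have g_int: "(g has_integral Gamma lam) {0..}"
    using Gamma_integral_real[OF lam]
    by (rule has_integral_eq[rotated]) (simp add: g_def exp_minus field_simps)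
  have g_intI: "g integrable_on {0..a}" for a
    using g_int by (intro integrable_on_subinterval[of _ "{0..}"]) auto
  have b_int: "(b has_integral Beta lam y) {0..1}"
    unfolding b_def using has_integral_Beta_real[OF lam y] .
  have b_intI: "b integrable_on {0..1}" using b_int by auto
  have G_cont: "continuous_on {0..a} G" for a
    unfolding G_def by (rule indefinite_integral_continuous_1[OF g_intI])
  have Bi_cont: "continuous_on {0..1} Bi"
    unfolding Bi_def by (rule indefinite_integral_continuous_1[OF b_intI])
  have D_cont: "continuous_on {0..a} D" for a
  proof -
    have "continuous_on {0..a} (\<lambda>x. x/(x+y))"
      using y by (intro continuous_intros) auto
    moreover have "(\<lambda>x. x/(x+y)) ` {0..a} \<subseteq> {0..1}" using y by auto
    ultimately have "continuous_on {0..a} (\<lambda>x. Bi (x/(x+y)))"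
      by (rule continuous_on_compose2[OF Bi_cont])
    then show ?thesis unfolding D_def using G_cont by (intro continuous_intros)
  qed
  have D0: "D 0 = 0" by (simp add: D_def G_def Bi_def)
  have derD: "DERIV D t :> g t - K * (b (t/(t+y)) * (y/(t+y)^2))" if t: "t > 0" for t
  proof -
    have "isCont g t" unfolding g_def using t by (intro continuous_intros) auto
    then have "(G has_vector_derivative g t) (at t within {0..t+1})"
      unfolding G_def
      using integral_has_vector_derivative_continuous_at[OF g_intI[of "t+1"], where x=t and S="{}"] t
      by (simp add: continuous_at_imp_continuous_within)
    then have dG: "DERIV G t :> g t"
      using t by (simp add: at_within_Icc_at has_real_derivative_iff_has_vector_derivative)
    define u where "u = t/(t+y)"
    have u: "0 < u" "u < 1" using t y by (auto simp: u_def field_simps)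
    have "isCont b u" unfolding b_def using u by (intro continuous_intros) auto
    then have "(Bi has_vector_derivative b u) (at u within {0..1})"
      unfolding Bi_def
      using integral_has_vector_derivative_continuous_at[OF b_intI, where x=u and S="{}"] u
      by (simp add: continuous_at_imp_continuous_within)
    then have dB: "DERIV Bi u :> b u"
      using u by (simp add: at_within_Icc_at has_real_derivative_iff_has_vector_derivative)
    have dq: "DERIV (\<lambda>x. x/(x+y)) t :> y/(t+y)^2"
      using t y by (auto intro!: derivative_eq_intros simp: field_simps power2_eq_square)
    have "DERIV (\<lambda>x. Bi (x/(x+y))) t :> b u * (y/(t+y)^2)"
      unfolding u_def by (rule DERIV_chain2[OF dB[unfolded u_def] dq])
    then have "DERIV (\<lambda>x. K * Bi (x/(x+y))) t :> K * (b u * (y/(t+y)^2))"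
      by (rule DERIV_cmult)
    then show ?thesis unfolding D_def u_def by (rule DERIV_diff[OF dG])
  qed
  have key: "K * (b (t/(t+y)) * (y/(t+y)^2)) = t powr (lam-1) * exp(-t - psi t)" if t: "t > 0" for t
  proof -
    have ty: "t + y > 0" using t y by simp
    have "K * (b (t/(t+y)) * (y/(t+y)^2)) =
       exp (ln K) * exp ((lam-1) * (ln t - ln (t+y))) * exp ((y-1) * (ln y - ln (t+y)))
       * exp (ln y) * exp (- 2 * ln (t+y))"
    proof -
      have "1 - t/(t+y) = y/(t+y)" using ty by (simp add: field_simps)
      moreover have "(t+y)^2 = exp (2 * ln (t+y))"
      proof -
        have "exp (2 * ln (t+y)) = exp (ln (t+y)) * exp (ln (t+y))"
          by (simp only: mult_2 exp_add)
        then show ?thesis using ty by (simp add: power2_eq_square)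
      qed
      ultimately show ?thesis using t y ty K
        by (simp add: b_def powr_def ln_div exp_minus field_simps)
    qed
    also have "\<dots> = exp (ln K + (lam-1) * (ln t - ln (t+y)) + (y-1) * (ln y - ln (t+y))
       + ln y + (- 2 * ln (t+y)))" by (simp only: exp_add)
    also have "\<dots> = exp ((lam-1) * ln t + (-t - psi t))"
      by (rule arg_cong[where f=exp]) (simp add: psi_def c_def algebra_simps)
    also have "\<dots> = t powr (lam-1) * exp(-t - psi t)"
      using t by (simp add: powr_def exp_add)
    finally show ?thesis .
  qed
  have derD': "DERIV D t :> t powr (lam-1) * (exp(-t) - exp(-t - psi t))" if t: "t > 0" for t
    using derD[OF t] key[OF t] by (simp add: g_def algebra_simps)
  obtain s0 where s0: "s0 > 0" "\<And>x. 0 < x \<Longrightarrow> x < s0 \<Longrightarrow> psi x > 0"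
    "\<And>x. s0 < x \<Longrightarrow> psi x < 0"
    using psi_sign[OF lam y c0] unfolding psi_def by metis
  have "(G \<longlongrightarrow> Gamma lam) at_top"
  proof -
    have gn: "g t \<ge> 0" for t by (simp add: g_def)
    have ai: "set_integrable lebesgue {0..} g"
      using nonnegative_absolutely_integrable_1[of g "{0..}"] g_int gn by auto
    have "((\<lambda>b. set_lebesgue_integral lebesgue {0..b} g) \<longlongrightarrow> set_lebesgue_integral lebesgue {0..} g) at_top"
      by (rule tendsto_set_lebesgue_integral_at_top[OF _ ai]) auto
    moreover have "set_lebesgue_integral lebesgue {0..} g = Gamma lam"
      using set_lebesgue_integral_eq_integral(2)[OF ai] g_int by (simp add: integral_unique)
    moreover have "set_lebesgue_integral lebesgue {0..b} g = G b" for b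
      using set_lebesgue_integral_eq_integral(2)[OF set_integrable_subset[OF ai]]
      by (cases "b \<ge> 0") (auto simp: G_def)
    ultimately show ?thesis by simp
  qed
  moreover have "((\<lambda>x. Bi (x/(x+y))) \<longlongrightarrow> Bi 1) at_top"
  proof (rule continuous_on_tendsto_compose[OF Bi_cont])
    show "((\<lambda>x. x/(x+y)) \<longlongrightarrow> 1) at_top" using y by real_asymp
    show "eventually (\<lambda>x. x/(x+y) \<in> {0..1}) at_top"
      using eventually_ge_at_top[of 0] by eventually_elim (use y in auto)
  qed auto
  moreover have "Bi 1 = Beta lam y" unfolding Bi_def using b_int by (simp add: integral_unique)
  ultimately have lim: "(D \<longlongrightarrow> Gamma lam - K * Beta lam y) at_top"
    unfolding D_def by (auto intro!: tendsto_intros)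
  have "D x > 0"
  proof (cases "x \<le> s0")
    case True
    have "D 0 < D x"
    proof (rule DERIV_pos_imp_increasing_open[OF x _ D_cont])
      fix t assume t: "0 < t" "t < x"
      have "psi t > 0" using s0(2)[of t] t True by simp
      then have "t powr (lam-1) * (exp(-t) - exp(-t - psi t)) > 0" using t by simp
      then show "\<exists>d. DERIV D t :> d \<and> d > 0" using derD'[of t] t by blast
    qed
    then show ?thesis using D0 by simp
  next
    case False
    have decr: "D z < D a" if "x \<le> a" "a < z" for a z
    proof (rule DERIV_neg_imp_decreasing_open[OF that(2)])
      fix t assume t: "a < t" "t < z"
      have "psi t < 0" using s0(3)[of t] t False that by simp
      then have "t powr (lam-1) * (exp(-t) - exp(-t - psi t)) < 0"
        using t x that by (simp add: mult_pos_neg)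
      then show "\<exists>d. DERIV D t :> d \<and> d < 0" using derD'[of t] t x that by auto
    next
      show "continuous_on {a..z} D"
        by (rule continuous_on_subset[OF D_cont[of z]]) (use x that in auto)
    qed
    have "eventually (\<lambda>z. D z \<le> D (x+1)) at_top"
      using eventually_ge_at_top[of "x+1"]
    proof eventually_elim
      case (elim z)
      show ?case
      proof (cases "z = x+1")
        case False
        then show ?thesis using decr[of "x+1" z] elim by simp
      qed simp
    qed
    then have "Gamma lam - K * Beta lam y \<le> D (x+1)"
      by (rule tendsto_upperbound[OF lim]) simp
    then show ?thesis using decr[of x "x+1"] KB by simp
  qed
  then show ?thesis
    by (simp add: D_def G_def Bi_def incomplete_beta_def lower_incomplete_gamma_def b_def g_def)
qed

lemma Gamma_real_pos:
  fixes x :: real assumes "x > 0" shows "Gamma x > 0"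
  using Gamma_real_pos_exp[OF assms] by simp

lemma lnGamma_shift:
  fixes y :: real assumes y: "y > 0"
  shows "ln (Gamma (y+1)) = ln y + ln (Gamma y)"
proof -
  have "Gamma (y+1) = y * Gamma y" using y by (intro Gamma_plus1) (auto simp: nonpos_Ints_def)
  then show ?thesis using y Gamma_real_pos[OF y] by (simp add: ln_mult less_imp_neq[OF Gamma_real_pos[OF y], symmetric])
qed

lemma wendel1:
  fixes lam y :: real assumes lam: "0 < lam" "lam < 1" and y: "y > 0"
  shows "Gamma (lam + y) \<le> Gamma y * y powr lam"
proof -
  have "(ln \<circ> Gamma) ((1-lam) *\<^sub>R y + lam *\<^sub>R (y+1)) \<le> (1-lam) * (ln \<circ> Gamma) y + lam * (ln \<circ> Gamma) (y+1)"
    by (rule convex_onD[OF log_convex_Gamma_real]) (use lam y in auto)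
  moreover have "(1-lam) *\<^sub>R y + lam *\<^sub>R (y+1) = lam + y" by (simp add: algebra_simps)
  ultimately have "ln (Gamma (lam+y)) \<le> (1-lam) * ln (Gamma y) + lam * (ln y + ln (Gamma y))"
    using lnGamma_shift[OF y] by simp
  also have "\<dots> = ln (Gamma y * y powr lam)"
    using y Gamma_real_pos[OF y] by (simp add: ln_mult ln_powr algebra_simps less_imp_neq[OF Gamma_real_pos[OF y], symmetric])
  finally show ?thesis
    using Gamma_real_pos[of "lam+y"] Gamma_real_pos[OF y] lam y by (subst (asm) ln_le_cancel_iff) auto
qed

lemma wendel2:
  fixes lam y :: real assumes lam: "1 < lam" and y: "y > 0"
  shows "Gamma y * y powr lam \<le> Gamma (lam + y)"
proof -
  have "(ln \<circ> Gamma) ((1-1/lam) *\<^sub>R y + (1/lam) *\<^sub>R (y+lam)) \<le> (1-1/lam) * (ln \<circ> Gamma) y + (1/lam) * (ln \<circ> Gamma) (y+lam)"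
    by (rule convex_onD[OF log_convex_Gamma_real]) (use lam y in auto)
  moreover have "(1-1/lam) *\<^sub>R y + (1/lam) *\<^sub>R (y+lam) = y + 1" using lam by (simp add: field_simps)
  ultimately have "ln y + ln (Gamma y) \<le> (1-1/lam) * ln (Gamma y) + (1/lam) * ln (Gamma (y+lam))"
    using lnGamma_shift[OF y] by simp
  then have "lam * (ln y + ln (Gamma y)) \<le> lam * ((1-1/lam) * ln (Gamma y) + (1/lam) * ln (Gamma (y+lam)))"
    using lam by (intro mult_left_mono) auto
  then have "ln (Gamma y * y powr lam) \<le> ln (Gamma (lam + y))"
    using y Gamma_real_pos[OF y] lam by (simp add: ln_mult ln_powr algebra_simps less_imp_neq[OF Gamma_real_pos[OF y], symmetric])
  then show ?thesis
    using Gamma_real_pos[of "lam+y"] Gamma_real_pos[OF y] lam y by (subst (asm) ln_le_cancel_iff) auto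
qed

theorem proposition1p1:
  fixes lam :: real
  assumes "lam > 0"
  shows "(lam < 1 \<longrightarrow> (\<forall>x y :: real. x > 0 \<longrightarrow> y > 0 \<longrightarrow>
            Gamma (lam + y) / Gamma y * incomplete_beta lam y (x / (x + y))
              < lower_incomplete_gamma lam x))
       \<and> (lam > 1 \<longrightarrow> (\<forall>x y :: real. x > 0 \<longrightarrow> y > 0 \<longrightarrow>
            y powr lam * incomplete_beta lam y (x / (x + y))
              < lower_incomplete_gamma lam x))"
proof (intro conjI impI allI)
  fix x y :: real assume l1: "lam < 1" and x: "x > 0" and y: "y > 0"
  have gl: "Gamma lam > 0" "Gamma y > 0" "Gamma (lam + y) > 0"
    using Gamma_real_pos assms y by auto
  show "Gamma (lam + y) / Gamma y * incomplete_beta lam y (x / (x + y)) < lower_incomplete_gamma lam x"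
  proof (rule main_ineq[OF assms y _ _ _ x])
    show "Gamma (lam + y) / Gamma y > 0" using gl by simp
    show "Gamma (lam + y) / Gamma y \<le> y powr lam"
      using wendel1[OF assms l1 y] gl by (simp add: divide_le_eq mult.commute)
    show "Gamma (lam + y) / Gamma y * Beta lam y \<le> Gamma lam"
      using gl by (simp add: Beta_def)
  qed
next
  fix x y :: real assume l1: "lam > 1" and x: "x > 0" and y: "y > 0"
  have gl: "Gamma lam > 0" "Gamma y > 0" "Gamma (lam + y) > 0"
    using Gamma_real_pos assms y by auto
  show "y powr lam * incomplete_beta lam y (x / (x + y)) < lower_incomplete_gamma lam x"
  proof (rule main_ineq[OF assms y _ _ _ x])
    show "y powr lam > 0" using y by simp
    show "y powr lam \<le> y powr lam" by simp
    have "y powr lam * Gamma y \<le> Gamma (lam + y)" using wendel2[OF l1 y] by (simp add: mult.commute)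
    then have "y powr lam * Gamma y / Gamma (lam + y) \<le> 1" using gl by simp
    then have "Gamma lam * (y powr lam * Gamma y / Gamma (lam + y)) \<le> Gamma lam * 1"
      using gl by (intro mult_left_mono) auto
    then show "y powr lam * Beta lam y \<le> Gamma lam"
      by (simp add: Beta_def field_simps)
  qed
qed

end
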